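(* For any $n$-qubit pure states $\ket{\psi},\ket{\phi}$, $$|\mathcal{C}(\ket{\psi})-\mathcal{C}(\ket{\phi})|\le\sqrt2\,D_{tr}(\ket{\psi}\!\bra{\psi},\ket{\phi}\!\bra{\phi}).$$
   Context: $D_{tr}(\rho,\sigma)=\frac12\|\rho-\sigma\|_1$ is the trace distance. $\mathcal{C}(\ket{\psi})=1-\frac{1}{2^{n}}\sum_{\alpha\subseteq [n]}\mathrm{Tr}[\rho_\alpha^2]$, with $\rho_\alpha$ the reduced state of $\ket{\psi}$ on $\alpha$ and $\mathrm{Tr}[\rho_\emptyset^2]=1$. *)

theory Defs
  imports "Jordan_Normal_Form.Char_Poly"
begin

text \<open>An n-qubit pure state is a normalized vector of 2^n complex amplitudes, indexed by
  the computational basis states i < 2^n; qubit k of basis state i is the k-th bit of i.\<close>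

definition pure_state :: "nat \<Rightarrow> (nat \<Rightarrow> complex) \<Rightarrow> bool" where
  "pure_state n \<psi> \<longleftrightarrow> (\<Sum>i<2^n. (cmod (\<psi> i))\<^sup>2) = 1"

definition proj :: "nat \<Rightarrow> (nat \<Rightarrow> complex) \<Rightarrow> complex mat" where
  "proj n \<psi> = mat (2^n) (2^n) (\<lambda>(i,j). \<psi> i * cnj (\<psi> j))"

definition ctrans :: "complex mat \<Rightarrow> complex mat" where
  "ctrans A = mat (dim_col A) (dim_row A) (\<lambda>(i,j). cnj (A $$ (j,i)))"

text \<open>Trace norm: sum of the singular values of A (with multiplicity), i.e. the sum of
  the square roots of the eigenvalues of A^* A counted with algebraic multiplicity.\<close>
definition trace_norm :: "complex mat \<Rightarrow> real" where
  "trace_norm A = (\<Sum>z\<in>{z. poly (char_poly (ctrans A * A)) z = 0}.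
       real (order z (char_poly (ctrans A * A))) * sqrt (Re z))"

definition trace_dist :: "complex mat \<Rightarrow> complex mat \<Rightarrow> real" where
  "trace_dist \<rho> \<sigma> = trace_norm (\<rho> - \<sigma>) / 2"

text \<open>Basis indices (< 2^n) of the subsystem alpha: all bits outside alpha are zero.
  Reduced state rho_alpha on these indices (partial trace over the complement of alpha).\<close>
definition sub_idx :: "nat \<Rightarrow> nat set \<Rightarrow> nat set" where
  "sub_idx n \<alpha> = {i. i < 2^n \<and> (\<forall>b. \<not> b \<in> \<alpha> \<longrightarrow> \<not> bit i b)}"

definition reduced :: "nat \<Rightarrow> (nat \<Rightarrow> complex) \<Rightarrow> nat set \<Rightarrow> nat \<Rightarrow> nat \<Rightarrow> complex" where
  "reduced n \<psi> \<alpha> i j = (\<Sum>k\<in>sub_idx n ({0..<n} - \<alpha>). \<psi> (i + k) * cnj (\<psi> (j + k)))"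

definition purity :: "nat \<Rightarrow> (nat \<Rightarrow> complex) \<Rightarrow> nat set \<Rightarrow> real" where
  "purity n \<psi> \<alpha> = Re (\<Sum>i\<in>sub_idx n \<alpha>. \<Sum>j\<in>sub_idx n \<alpha>. reduced n \<psi> \<alpha> i j * reduced n \<psi> \<alpha> j i)"

definition C_ent :: "nat \<Rightarrow> (nat \<Rightarrow> complex) \<Rightarrow> real" where
  "C_ent n \<psi> = 1 - (\<Sum>\<alpha>\<in>Pow {0..<n}. purity n \<psi> \<alpha>) / 2^n"

end

theory Submission
  imports Defs "Jordan_Normal_Form.Schur_Decomposition" "HOL-Analysis.L2_Norm"
begin

unbundle bit_operations_syntax




lemma lt_pow_iff: "(x::nat) < 2^n \<longleftrightarrow> (\<forall>b. bit x b \<longrightarrow> b < n)"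
proof -
  have "x < 2^n \<longleftrightarrow> take_bit n x = x" by (simp add: take_bit_nat_eq_self_iff)
  also have "\<dots> \<longleftrightarrow> (\<forall>b. bit x b \<longrightarrow> b < n)" by (auto simp: bit_eq_iff bit_take_bit_iff)
  finally show ?thesis .
qed

definition mk :: "nat set \<Rightarrow> nat" where "mk A = (\<Sum>b\<in>A. 2^b)"

lemma bit_mk_all: "finite A \<Longrightarrow> (\<forall>b. bit (mk A) b \<longleftrightarrow> b \<in> A)"
proof (induct A rule: finite_induct)
  case empty then show ?case by (simp add: mk_def)
next
  case (insert a A)
  have "mk (insert a A) = 2^a + mk A" using insert by (simp add: mk_def)
  also have "\<dots> = 2^a OR mk A"
  proof (rule disjunctive_add_eq_or)
    show "2^a AND mk A = 0"
    proof (rule bit_eqI)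
      fix b :: nat
      show "bit (2^a AND mk A) b = bit 0 b" using insert by (auto simp: bit_and_iff bit_exp_iff)
    qed
  qed
  finally show ?case using insert by (auto simp: bit_or_iff bit_exp_iff)
qed

definition rs :: "nat set \<Rightarrow> nat \<Rightarrow> nat" where "rs A x = x AND mk A"

lemma bit_rs: "A \<subseteq> {0..<n} \<Longrightarrow> bit (rs A x) b \<longleftrightarrow> bit x b \<and> b \<in> A"
  using bit_mk_all[of A] finite_subset[of A "{0..<n}"] by (auto simp: rs_def bit_and_iff)

lemma sub_idx_iff: "i \<in> sub_idx n A \<longleftrightarrow> i < 2^n \<and> (\<forall>b. bit i b \<longrightarrow> b \<in> A)"
  by (auto simp: sub_idx_def)

lemma sub_idx_iff2: "A \<subseteq> {0..<n} \<Longrightarrow> i \<in> sub_idx n A \<longleftrightarrow> (\<forall>b. bit i b \<longrightarrow> b \<in> A)"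
  by (auto simp: sub_idx_def lt_pow_iff)

definition sw :: "nat \<Rightarrow> nat set \<Rightarrow> nat \<times> nat \<Rightarrow> nat \<times> nat" where
  "sw n A p = (rs A (snd p) OR rs ({0..<n} - A) (fst p), rs A (fst p) OR rs ({0..<n} - A) (snd p))"

definition D :: "nat \<Rightarrow> (nat \<times> nat) set" where "D n = {..<2^n} \<times> {..<2^n}"

lemma bit_sw1: "A \<subseteq> {0..<n} \<Longrightarrow> bit (fst (sw n A p)) b \<longleftrightarrow> (b \<in> A \<and> bit (snd p) b) \<or> (b < n \<and> b \<notin> A \<and> bit (fst p) b)"
  by (auto simp: sw_def bit_or_iff bit_rs[of A n] bit_rs[of "{0..<n} - A" n])

lemma bit_sw2: "A \<subseteq> {0..<n} \<Longrightarrow> bit (snd (sw n A p)) b \<longleftrightarrow> (b \<in> A \<and> bit (fst p) b) \<or> (b < n \<and> b \<notin> A \<and> bit (snd p) b)"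
  by (auto simp: sw_def bit_or_iff bit_rs[of A n] bit_rs[of "{0..<n} - A" n])

lemma D_iff: "p \<in> D n \<longleftrightarrow> (\<forall>b. bit (fst p) b \<longrightarrow> b < n) \<and> (\<forall>b. bit (snd p) b \<longrightarrow> b < n)"
  by (cases p) (auto simp: D_def lt_pow_iff)

lemma sw_D: "A \<subseteq> {0..<n} \<Longrightarrow> p \<in> D n \<Longrightarrow> sw n A p \<in> D n"
  unfolding D_iff bit_sw1 bit_sw2 by auto

lemma sw_sw: assumes "A \<subseteq> {0..<n}" "p \<in> D n" shows "sw n A (sw n A p) = p"
proof -
  have "fst (sw n A (sw n A p)) = fst p" "snd (sw n A (sw n A p)) = snd p"
    using assms unfolding bit_eq_iff bit_sw1[OF assms(1)] bit_sw2[OF assms(1)] D_iff by auto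
  then show ?thesis by (simp add: prod_eq_iff)
qed

lemma sw_comp: assumes "A \<subseteq> {0..<n}" "C \<subseteq> {0..<n}" "p \<in> D n"
  shows "sw n C (sw n A p) = sw n ((A - C) \<union> (C - A)) p"
proof -
  have AC: "(A - C) \<union> (C - A) \<subseteq> {0..<n}" using assms by auto
  have "fst (sw n C (sw n A p)) = fst (sw n ((A - C) \<union> (C - A)) p)" "snd (sw n C (sw n A p)) = snd (sw n ((A - C) \<union> (C - A)) p)"
    using assms unfolding bit_eq_iff bit_sw1[OF assms(1)] bit_sw2[OF assms(1)] bit_sw1[OF assms(2)] bit_sw2[OF assms(2)]
      bit_sw1[OF AC] bit_sw2[OF AC] D_iff by auto
  then show ?thesis by (simp add: prod_eq_iff)
qed




lemma add_or: assumes "A \<subseteq> {0..<n}" "i \<in> sub_idx n A" "k \<in> sub_idx n ({0..<n} - A)"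
  shows "i + k = i OR k"
proof (rule disjunctive_add_eq_or)
  show "i AND k = 0"
  proof (rule bit_eqI)
    fix b :: nat
    show "bit (i AND k) b = bit 0 b" using assms by (auto simp: bit_and_iff sub_idx_iff)
  qed
qed

lemma sum_split: assumes A: "A \<subseteq> {0..<n}"
  shows "(\<Sum>x<2^n. f x) = (\<Sum>i\<in>sub_idx n A. \<Sum>k\<in>sub_idx n ({0..<n} - A). f (i+k))"
proof -
  let ?S = "sub_idx n A" and ?T = "sub_idx n ({0..<n} - A)"
  have B: "{0..<n} - A \<subseteq> {0..<n}" by auto
  have "(\<Sum>x<2^n. f x) = (\<Sum>p\<in>?S \<times> ?T. f (fst p + snd p))"
  proof (rule sum.reindex_bij_witness[where j = "\<lambda>x. (rs A x, rs ({0..<n} - A) x)" and i = "\<lambda>p. fst p + snd p"])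
    fix x assume x: "x \<in> {..<(2::nat)^n}"
    show r1: "(rs A x, rs ({0..<n} - A) x) \<in> ?S \<times> ?T"
      using A B by (auto simp: sub_idx_iff2[OF A] sub_idx_iff2[OF B] bit_rs[OF A] bit_rs[OF B])
    have "fst (rs A x, rs ({0..<n} - A) x) + snd (rs A x, rs ({0..<n} - A) x) = rs A x OR rs ({0..<n} - A) x"
      using add_or[OF A] r1 by auto
    also have "\<dots> = x"
    proof (rule bit_eqI)
      fix b :: nat
      show "bit (rs A x OR rs ({0..<n} - A) x) b = bit x b"
        using x A B by (auto simp: bit_or_iff bit_rs[OF A] bit_rs[OF B] lt_pow_iff)
    qed
    finally show "fst (rs A x, rs ({0..<n} - A) x) + snd (rs A x, rs ({0..<n} - A) x) = x" .
    then show "f (fst (rs A x, rs ({0..<n} - A) x) + snd (rs A x, rs ({0..<n} - A) x)) = f x" by simp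
  next
    fix p assume p: "p \<in> ?S \<times> ?T"
    have e: "fst p + snd p = fst p OR snd p" using add_or[OF A] p by auto
    show "(rs A (fst p + snd p), rs ({0..<n} - A) (fst p + snd p)) = p"
    proof -
      have "rs A (fst p + snd p) = fst p" "rs ({0..<n} - A) (fst p + snd p) = snd p"
        unfolding e bit_eq_iff using p A B by (auto simp: bit_or_iff bit_rs[OF A] bit_rs[OF B] sub_idx_iff)
      then show ?thesis by (simp add: prod_eq_iff)
    qed
    show "fst p + snd p \<in> {..<2^n}" unfolding e using p A B by (auto simp: lt_pow_iff bit_or_iff sub_idx_iff)
  qed
  also have "\<dots> = (\<Sum>i\<in>?S. \<Sum>k\<in>?T. f (i+k))"
    by (subst sum.cartesian_product) (simp add: case_prod_beta)
  finally show ?thesis .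
qed

lemma finite_sub_idx[simp]: "finite (sub_idx n A)"
  unfolding sub_idx_def by auto

lemma purity_sw: assumes A: "A \<subseteq> {0..<n}"
  shows "purity n \<psi> A = Re (\<Sum>p\<in>D n. \<psi> (fst p) * \<psi> (snd p) * cnj (\<psi> (fst (sw n A p))) * cnj (\<psi> (snd (sw n A p))))"
proof -
  let ?S = "sub_idx n A" and ?T = "sub_idx n ({0..<n} - A)"
  have B: "{0..<n} - A \<subseteq> {0..<n}" by auto
  let ?G = "\<lambda>p. \<psi> (fst p) * \<psi> (snd p) * cnj (\<psi> (fst (sw n A p))) * cnj (\<psi> (snd (sw n A p)))"
  have sw_eq: "sw n A (i+k, j+l) = (j+k, i+l)" if "i \<in> ?S" "k \<in> ?T" "j \<in> ?S" "l \<in> ?T" for i j k l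
  proof -
    have e: "i + k = i OR k" "j + l = j OR l" "j + k = j OR k" "i + l = i OR l"
      using add_or[OF A] that by auto
    have "fst (sw n A (i+k, j+l)) = j + k" "snd (sw n A (i+k, j+l)) = i + l"
      unfolding e bit_eq_iff bit_sw1[OF A] bit_sw2[OF A] using that A B
      by (auto simp: bit_or_iff sub_idx_iff)
    then show ?thesis by (simp add: prod_eq_iff)
  qed
  have "(\<Sum>p\<in>D n. ?G p) = (\<Sum>x<2^n. \<Sum>y<2^n. ?G (x,y))"
    unfolding D_def by (simp add: sum.cartesian_product case_prod_beta)
  also have "\<dots> = (\<Sum>x<2^n. \<Sum>j\<in>?S. \<Sum>l\<in>?T. ?G (x, j+l))"
    by (subst sum_split[OF A]) simp
  also have "\<dots> = (\<Sum>i\<in>?S. \<Sum>k\<in>?T. \<Sum>j\<in>?S. \<Sum>l\<in>?T. ?G (i+k, j+l))"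
    by (subst sum_split[OF A]) simp
  also have "\<dots> = (\<Sum>i\<in>?S. \<Sum>k\<in>?T. \<Sum>j\<in>?S. \<Sum>l\<in>?T. \<psi> (i+k) * cnj (\<psi> (j+k)) * (\<psi> (j+l) * cnj (\<psi> (i+l))))"
    by (intro sum.cong refl) (simp add: sw_eq algebra_simps)
  also have "\<dots> = (\<Sum>i\<in>?S. \<Sum>j\<in>?S. \<Sum>k\<in>?T. \<Sum>l\<in>?T. \<psi> (i+k) * cnj (\<psi> (j+k)) * (\<psi> (j+l) * cnj (\<psi> (i+l))))"
    by (rule sum.cong[OF refl], rule sum.swap)
  also have "\<dots> = (\<Sum>i\<in>?S. \<Sum>j\<in>?S. reduced n \<psi> A i j * reduced n \<psi> A j i)"
    unfolding reduced_def by (simp add: sum_product)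
  finally show ?thesis unfolding purity_def by simp
qed


lemma finite_D[simp]: "finite (D n)" by (simp add: D_def)

definition ipD :: "nat \<Rightarrow> (nat\<times>nat \<Rightarrow> complex) \<Rightarrow> (nat\<times>nat \<Rightarrow> complex) \<Rightarrow> complex" where
  "ipD n f g = (\<Sum>p\<in>D n. f p * cnj (g p))"

definition Pj :: "nat \<Rightarrow> (nat\<times>nat \<Rightarrow> complex) \<Rightarrow> nat\<times>nat \<Rightarrow> complex" where
  "Pj n f p = (\<Sum>a\<in>Pow {0..<n}. f (sw n a p)) / 2^n"

definition nsq :: "nat \<Rightarrow> (nat\<times>nat \<Rightarrow> complex) \<Rightarrow> real" where
  "nsq n f = (\<Sum>p\<in>D n. (cmod (f p))^2)"

lemma sum_sw_swap: assumes "a \<subseteq> {0..<n}"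
  shows "(\<Sum>p\<in>D n. F (sw n a p) p) = (\<Sum>p\<in>D n. F p (sw n a p))"
  by (rule sum.reindex_bij_witness[where i="sw n a" and j="sw n a"]) (use assms in \<open>auto simp: sw_sw sw_D\<close>)

lemma P1: "ipD n (Pj n f) g = ipD n f (Pj n g)"
proof -
  have "ipD n (Pj n f) g = (\<Sum>a\<in>Pow {0..<n}. \<Sum>p\<in>D n. f (sw n a p) * cnj (g p)) / 2^n"
    unfolding ipD_def Pj_def
    by (simp add: sum_divide_distrib[symmetric] sum_distrib_right sum.swap[of _ "D n"] )
  also have "\<dots> = (\<Sum>a\<in>Pow {0..<n}. \<Sum>p\<in>D n. f p * cnj (g (sw n a p))) / 2^n"
  proof -
    have "(\<Sum>p\<in>D n. f (sw n a p) * cnj (g p)) = (\<Sum>p\<in>D n. f p * cnj (g (sw n a p)))" if "a \<in> Pow {0..<n}" for a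
      using sum_sw_swap[of a n "\<lambda>u v. f u * cnj (g v)"] that by simp
    then have "(\<Sum>a\<in>Pow {0..<n}. \<Sum>p\<in>D n. f (sw n a p) * cnj (g p)) = (\<Sum>a\<in>Pow {0..<n}. \<Sum>p\<in>D n. f p * cnj (g (sw n a p)))"
      by (rule sum.cong[OF refl]) blast
    then show ?thesis by simp
  qed
  also have "\<dots> = ipD n f (Pj n g)"
    unfolding ipD_def Pj_def
    by (simp add: cnj_sum sum_divide_distrib[symmetric] sum_distrib_left sum.swap[of _ "D n"])
  finally show ?thesis .
qed

lemma sum_symdiff: assumes "a \<subseteq> {0..<n}"
  shows "(\<Sum>c\<in>Pow {0..<n}. h ((a - c) \<union> (c - a))) = (\<Sum>c\<in>Pow {0..<(n::nat)}. h c)"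
  by (rule sum.reindex_bij_witness[where i="\<lambda>c. (a - c) \<union> (c - a)" and j="\<lambda>c. (a - c) \<union> (c - a)"]) (use assms in auto)

lemma P2: assumes p: "p \<in> D n" shows "Pj n (Pj n f) p = Pj n f p"
proof -
  have "Pj n (Pj n f) p = (\<Sum>a\<in>Pow {0..<n}. (\<Sum>c\<in>Pow {0..<n}. f (sw n c (sw n a p))) / 2^n) / 2^n"
    unfolding Pj_def ..
  also have "\<dots> = (\<Sum>a\<in>Pow {0..<n}. (\<Sum>c\<in>Pow {0..<n}. f (sw n c p)) / 2^n) / 2^n"
  proof -
    have eq: "(\<Sum>c\<in>Pow {0..<n}. f (sw n c (sw n a p))) = (\<Sum>c\<in>Pow {0..<n}. f (sw n c p))" if a: "a \<in> Pow {0..<n}" for a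
    proof -
      have "(\<Sum>c\<in>Pow {0..<n}. f (sw n c (sw n a p))) = (\<Sum>c\<in>Pow {0..<n}. f (sw n ((a - c) \<union> (c - a)) p))"
        using a p by (intro sum.cong refl) (simp add: sw_comp)
      also have "\<dots> = (\<Sum>c\<in>Pow {0..<n}. f (sw n c p))"
        using a by (intro sum_symdiff[where h = "\<lambda>c. f (sw n c p)"]) auto
      finally show ?thesis .
    qed
    have "(\<Sum>a\<in>Pow {0..<n}. (\<Sum>c\<in>Pow {0..<n}. f (sw n c (sw n a p))) / 2^n) = (\<Sum>a\<in>Pow {0..<n}. (\<Sum>c\<in>Pow {0..<n}. f (sw n c p)) / 2^n)"
      by (rule sum.cong[OF refl]) (simp add: eq)
    then show ?thesis by simp
  qed
  also have "\<dots> = Pj n f p"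
    by (simp add: Pj_def card_Pow)
  finally show ?thesis .
qed

lemma K1: "ipD n (Pj n f) (Pj n g) = ipD n f (Pj n g)"
proof -
  have "ipD n (Pj n f) (Pj n g) = ipD n f (Pj n (Pj n g))" by (rule P1)
  also have "\<dots> = ipD n f (Pj n g)" unfolding ipD_def by (rule sum.cong[OF refl]) (simp add: P2)
  finally show ?thesis .
qed

lemma ipD_diff1: "ipD n (\<lambda>p. f p - g p) h = ipD n f h - ipD n g h"
  by (simp add: ipD_def algebra_simps sum_subtractf)

lemma ipD_diff2: "ipD n f (\<lambda>p. g p - h p) = ipD n f g - ipD n f h"
  by (simp add: ipD_def algebra_simps sum_subtractf)

lemma decomp: "ipD n f g = ipD n (Pj n f) (Pj n g) + ipD n (\<lambda>p. f p - Pj n f p) (\<lambda>p. g p - Pj n g p)"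
proof -
  have a: "ipD n f (Pj n g) = ipD n (Pj n f) (Pj n g)" by (rule K1[symmetric])
  have b: "ipD n (Pj n f) g = ipD n (Pj n f) (Pj n g)" by (metis K1 P1)
  show ?thesis unfolding ipD_diff1 ipD_diff2 a b by simp
qed

lemma ipD_self: "ipD n f f = of_real (nsq n f)"
  unfolding ipD_def nsq_def of_real_sum by (rule sum.cong[OF refl]) (simp only: complex_norm_square)

lemma cs_gen: assumes "finite A"
  shows "cmod (\<Sum>i\<in>A. f i * cnj (g i)) \<le> sqrt (\<Sum>i\<in>A. (cmod (f i))^2) * sqrt (\<Sum>i\<in>A. (cmod (g i))^2)"
proof -
  have "cmod (\<Sum>i\<in>A. f i * cnj (g i)) \<le> (\<Sum>i\<in>A. cmod (f i * cnj (g i)))" by (rule norm_sum)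
  also have "\<dots> = (\<Sum>i\<in>A. \<bar>cmod (f i)\<bar> * \<bar>cmod (g i)\<bar>)" by (simp add: norm_mult)
  also have "\<dots> \<le> L2_set (\<lambda>i. cmod (f i)) A * L2_set (\<lambda>i. cmod (g i)) A" by (rule L2_set_mult_ineq)
  finally show ?thesis by (simp add: L2_set_def)
qed

lemma cs_D: "cmod (ipD n f g) \<le> sqrt (nsq n f) * sqrt (nsq n g)"
  unfolding ipD_def nsq_def by (rule cs_gen) simp


definition ip :: "nat \<Rightarrow> (nat\<Rightarrow>complex) \<Rightarrow> (nat\<Rightarrow>complex) \<Rightarrow> complex" where
  "ip N x y = (\<Sum>k<N. cnj (x k) * y k)"

definition rk :: "nat \<Rightarrow> (nat\<Rightarrow>complex) \<Rightarrow> (nat\<Rightarrow>complex) \<Rightarrow> complex \<Rightarrow> complex \<Rightarrow> complex \<Rightarrow> complex \<Rightarrow> complex mat" where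
  "rk N x y a b c d = mat N N (\<lambda>(i,j). a * x i * cnj (x j) + b * x i * cnj (y j) + c * y i * cnj (x j) + d * y i * cnj (y j))"

lemma rk_carrier[simp]: "rk N x y a b c d \<in> carrier_mat N N"
  by (simp add: rk_def)

lemma sum4: "(\<Sum>k<N. (u1*cnj(x k) + u2*cnj(y k)) * (x k * v1 + y k * v2)) = u1*v1*ip N x x + u1*v2*ip N x y + u2*v1*ip N y x + u2*v2*ip N y y"
  apply (simp only: ip_def sum_distrib_left sum.distrib[symmetric])
  apply (rule sum.cong, simp)
  apply (simp add: algebra_simps)
  done

lemma rk_mult: assumes "p = a * ip N x x + b * ip N y x" "q = a * ip N x y + b * ip N y y"
       "r = c * ip N x x + d * ip N y x" "t = c * ip N x y + d * ip N y y"
  shows "rk N x y a b c d * rk N x y a' b' c' d' = rk N x y (p*a' + q*c') (p*b'+q*d') (r*a'+t*c') (r*b'+t*d')"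
proof -
  have "(rk N x y a b c d * rk N x y a' b' c' d') $$ (i,j) = rk N x y (p*a' + q*c') (p*b'+q*d') (r*a'+t*c') (r*b'+t*d') $$ (i,j)"
    if i: "i < N" and j: "j < N" for i j
  proof -
  have "(rk N x y a b c d * rk N x y a' b' c' d') $$ (i,j) = 
    (\<Sum>k<N. ((a * x i + c * y i)*cnj(x k) + (b * x i + d * y i)*cnj(y k)) * (x k * (a' * cnj (x j) + b' * cnj (y j)) + y k * (c' * cnj (x j) + d' * cnj (y j))))"
    using i j unfolding rk_def
    by (simp add: scalar_prod_def atLeast0LessThan[symmetric], intro sum.cong, auto simp: algebra_simps)
  also have "\<dots> = rk N x y (p*a' + q*c') (p*b'+q*d') (r*a'+t*c') (r*b'+t*d') $$ (i,j)"
    unfolding sum4 using i j assms by (simp add: rk_def algebra_simps)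
  finally show ?thesis .
  qed
  then show ?thesis by (intro eq_matI) (auto simp: rk_def)
qed

definition tr :: "complex mat \<Rightarrow> complex" where "tr A = (\<Sum>i<dim_row A. A $$ (i,i))"

lemma tr_comm: assumes "A \<in> carrier_mat n m" "B \<in> carrier_mat m n"
  shows "tr (A*B) = tr (B*A)"
proof -
  have "tr (A*B) = (\<Sum>i<n. \<Sum>k<m. A $$ (i,k) * B $$ (k,i))"
    using assms by (simp add: tr_def scalar_prod_def atLeast0LessThan)
  also have "\<dots> = (\<Sum>k<m. \<Sum>i<n. B $$ (k,i) * A $$ (i,k))"
    by (subst sum.swap) (simp add: mult.commute)
  also have "\<dots> = tr (B*A)"
    using assms by (simp add: tr_def scalar_prod_def atLeast0LessThan)
  finally show ?thesis .
qed

lemma tr_sim: assumes "similar_mat_wit B T P Q" shows "tr B = tr T"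
proof -
  define n where "n = dim_row B"
  note w = similar_mat_witD[OF n_def assms]
  have c: "B \<in> carrier_mat n n" "T \<in> carrier_mat n n" "P \<in> carrier_mat n n" "Q \<in> carrier_mat n n"
    and QP: "Q * P = 1\<^sub>m n" and B: "B = P * T * Q" using w by blast+
  have "tr B = tr ((P * T) * Q)" using B by simp
  also have "\<dots> = tr (Q * (P * T))" by (rule tr_comm[of _ n n], insert c, auto)
  also have "\<dots> = tr ((Q * P) * T)" using c by (subst assoc_mult_mat[of Q n n P n T n], auto)
  also have "\<dots> = tr T" using c QP by simp
  finally show ?thesis .
qed

lemma tr_diag: "tr T = sum_list (diag_mat T)"
  by (simp add: tr_def diag_mat_def sum_list_distinct_conv_sum_set atLeast0LessThan)

lemma order_lin: "Polynomial.order a (\<Prod>e\<leftarrow>es. [:- e, 1:]) = length (filter ((=) a) es)"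
proof (induct es)
  case (Cons b es)
  have o1: "Polynomial.order a [:-b,1:] = (if a = b then 1 else 0)"
  proof (cases "a = b")
    case True then show ?thesis using order_power_n_n[of a 1] by simp
  next
    case False
    have "poly [:-b,1:] a \<noteq> 0" using False by simp
    then show ?thesis using False by (simp add: order_0I)
  qed
  have "Polynomial.order a (\<Prod>e\<leftarrow>b#es. [:- e, 1:]) = Polynomial.order a ([:-b,1:] * (\<Prod>e\<leftarrow>es. [:- e, 1:]))" by simp
  also have "\<dots> = Polynomial.order a [:-b,1:] + Polynomial.order a (\<Prod>e\<leftarrow>es. [:- e, 1:])"
  proof (rule order_mult)
    have nz: "(\<Prod>e\<leftarrow>es. [:- e, 1:]) \<noteq> 0" by (auto simp: prod_list_zero_iff)
    have nz2: "[:-b,1:] \<noteq> 0" by simp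
    show "[:-b,1:] * (\<Prod>e\<leftarrow>es. [:- e, 1:]) \<noteq> 0" by (rule no_zero_divisors[OF nz2 nz])
  qed
  finally show ?case using o1 Cons by auto
qed simp

lemma sum_list_two: assumes "\<And>e. e \<in> set es \<Longrightarrow> e = 0 \<or> e = (s::complex)"
  shows "sum_list es = of_nat (length (filter ((=) s) es)) * s"
  using assms by (induct es) (auto simp: algebra_simps)

lemma smult_mat_vec: "(A::complex mat) \<in> carrier_mat n m \<Longrightarrow> v \<in> carrier_vec m \<Longrightarrow> (k \<cdot>\<^sub>m A) *\<^sub>v v = k \<cdot>\<^sub>v (A *\<^sub>v v)"
  by (intro eq_vecI) (auto simp: scalar_prod_def sum_distrib_left algebra_simps)

lemma tn_lemma: fixes B :: "complex mat"
  assumes B: "B \<in> carrier_mat N N" and BB: "B * B = complex_of_real t \<cdot>\<^sub>m B"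
    and trB: "tr B = 2 * complex_of_real t" and t: "t \<ge> 0"
  shows "(\<Sum>z\<in>{z. poly (char_poly B) z = 0}. real (Polynomial.order z (char_poly B)) * sqrt (Re z)) = 2 * sqrt t"
proof -
  let ?s = "complex_of_real t"
  obtain es where es: "char_poly B = (\<Prod>e\<leftarrow>es. [:- e, 1:])" and len: "length es = N"
    using char_poly_factorized[OF B] by blast
  obtain T P Q where sd: "schur_decomposition B es = (T,P,Q)" by (cases "schur_decomposition B es") auto
  from schur_decomposition[OF B es sd] have sim: "similar_mat_wit B T P Q" and dT: "diag_mat T = es" by auto
  have sumes: "sum_list es = 2 * ?s" using tr_sim[OF sim] tr_diag[of T] dT trB by simp
  have roots: "poly (char_poly B) z = 0 \<longleftrightarrow> z \<in> set es" for z
    unfolding es poly_prod_list by (auto simp: prod_list_zero_iff o_def)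
  have ev: "e = 0 \<or> e = ?s" if "e \<in> set es" for e
  proof -
    have "eigenvalue B e" using that roots eigenvalue_root_char_poly[OF B] by auto
    then obtain v where v: "eigenvector B v e" unfolding eigenvalue_def by auto
    have vc: "v \<in> carrier_vec N" and v0: "v \<noteq> 0\<^sub>v N" and Bv: "B *\<^sub>v v = e \<cdot>\<^sub>v v"
      using v B unfolding eigenvector_def by auto
    have "(B * B) *\<^sub>v v = B *\<^sub>v (B *\<^sub>v v)" using B vc by (simp add: assoc_mult_mat_vec)
    also have "\<dots> = (e * e) \<cdot>\<^sub>v v" using Bv B vc by (simp add: mult_mat_vec smult_smult_assoc)
    finally have 1: "(B * B) *\<^sub>v v = (e * e) \<cdot>\<^sub>v v" .
    have "(B * B) *\<^sub>v v = (?s * e) \<cdot>\<^sub>v v" using BB Bv B vc by (simp add: smult_mat_vec smult_smult_assoc)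
    with 1 have eq: "(e * e) \<cdot>\<^sub>v v = (?s * e) \<cdot>\<^sub>v v" by simp
    have "\<exists>i<N. v $ i \<noteq> 0"
    proof (rule ccontr)
      assume "\<not> ?thesis"
      then have "v = 0\<^sub>v N" using vc by (intro eq_vecI) auto
      with v0 show False by simp
    qed
    then obtain i where i: "i < N" "v $ i \<noteq> 0" by blast
    from arg_cong[OF eq, of "\<lambda>w. w $ i"] i vc have "e * e = ?s * e" by simp
    then have "e * (e - ?s) = 0" by (simp add: algebra_simps)
    then show ?thesis by simp
  qed
  have fin: "finite {0, ?s}" by simp
  have sub: "{z. poly (char_poly B) z = 0} \<subseteq> {0, ?s}" using roots ev by auto
  have "(\<Sum>z\<in>{z. poly (char_poly B) z = 0}. real (Polynomial.order z (char_poly B)) * sqrt (Re z)) =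
        (\<Sum>z\<in>{0, ?s}. real (Polynomial.order z (char_poly B)) * sqrt (Re z))"
    by (rule sum.mono_neutral_left[OF fin sub]) (auto intro: order_0I)
  also have "\<dots> = 2 * sqrt t"
  proof (cases "t = 0")
    case True then show ?thesis by simp
  next
    case False
    have "sum_list es = of_nat (length (filter ((=) ?s) es)) * ?s" using sum_list_two ev by blast
    with sumes have "of_nat (length (filter ((=) ?s) es)) * ?s = 2 * ?s" by simp
    with False have "(of_nat (length (filter ((=) ?s) es)) :: complex) = 2" by simp
    then have "length (filter ((=) ?s) es) = 2"
      by (metis of_nat_eq_iff of_nat_numeral)
    then have "Polynomial.order ?s (char_poly B) = 2" unfolding es order_lin .
    then show ?thesis using False by simp
  qed
  finally show ?thesis .
qed


lemma real_ineq: fixes x x' y y' r0 :: real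
  assumes "x \<ge> 0" "x' \<ge> 0" "y \<ge> 0" "y' \<ge> 0" and hx: "x^2 + x'^2 = 1" and hy: "y^2 + y'^2 = 1"
    and "0 \<le> r0" and r: "r0^2 \<le> x*y + x'*y'"
  shows "\<bar>x^2 - y^2\<bar> \<le> sqrt 2 * sqrt (1 - r0^2)"
proof -
  define m where "m = x*y + x'*y'"
  have P: "(x^2 + x'^2) * (y^2 + y'^2) = 1" using hx hy by simp
  have "1 - m^2 = (x^2 + x'^2) * (y^2 + y'^2) - m^2" using P by simp
  also have "\<dots> = (x*y' - x'*y)^2" unfolding m_def by (simp add: power2_eq_square algebra_simps)
  finally have L1: "1 - m^2 = (x*y' - x'*y)^2" .
  have "(x*y' + x'*y)^2 + (x*y - x'*y')^2 = (x^2 + x'^2) * (y^2 + y'^2)" by (simp add: power2_eq_square algebra_simps)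
  with P have L2: "(x*y' + x'*y)^2 \<le> 1" by (smt (verit) zero_le_power2)
  have "x^2 - y^2 = x^2 * (y^2 + y'^2) - y^2 * (x^2 + x'^2)" using hx hy by simp
  also have "\<dots> = (x*y' - x'*y)*(x*y' + x'*y)" by (simp add: power2_eq_square algebra_simps)
  finally have L3: "x^2 - y^2 = (x*y' - x'*y)*(x*y' + x'*y)" .
  have "(x^2 - y^2)^2 = (x*y' - x'*y)^2 * (x*y' + x'*y)^2" unfolding L3 by (simp add: power_mult_distrib)
  also have "\<dots> \<le> (x*y' - x'*y)^2" using L2 by (simp add: mult_left_le)
  finally have A1: "(x^2 - y^2)^2 \<le> 1 - m^2" using L1 by simp
  have m0: "m \<ge> r0^2" using r m_def by simp
  have r2: "r0^2 \<ge> 0" by simp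
  have "0 \<le> (x*y' - x'*y)^2" by simp
  then have "m^2 \<le> 1" using L1 by linarith
  then have m1: "m \<le> 1" using power2_le_imp_le[of m 1] by simp
  have "(r0^2)^2 \<le> m^2" using m0 r2 by (rule power_mono)
  then have "(x^2 - y^2)^2 \<le> 1 - (r0^2)^2" using A1 by simp
  also have "\<dots> = (1 - r0^2) * (1 + r0^2)" by (simp add: power2_eq_square algebra_simps)
  also have "\<dots> \<le> (1 - r0^2) * 2" using m0 m1 by (intro mult_left_mono) auto
  finally have "(x^2 - y^2)^2 \<le> 2 * (1 - r0^2)" by simp
  then have "sqrt ((x^2 - y^2)^2) \<le> sqrt (2 * (1 - r0^2))" by (rule real_sqrt_le_mono)
  moreover have "sqrt ((x^2 - y^2)^2) = \<bar>x^2 - y^2\<bar>" by (rule real_sqrt_abs)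
  moreover have "sqrt (2 * (1 - r0^2)) = sqrt 2 * sqrt (1 - r0^2)" by (rule real_sqrt_mult)
  ultimately show ?thesis by simp
qed


lemma ipD_Pj: "ipD n f (Pj n g) = (\<Sum>a\<in>Pow {0..<n}. \<Sum>p\<in>D n. f p * cnj (g (sw n a p))) / 2^n"
  unfolding ipD_def Pj_def
  by (simp add: cnj_sum sum_divide_distrib[symmetric] sum_distrib_left sum.swap[of _ "D n"])

lemma C_nsq: "C_ent n \<chi> = 1 - nsq n (Pj n (\<lambda>p. \<chi> (fst p) * \<chi> (snd p)))"
proof -
  define X where "X = (\<lambda>p. \<chi> (fst p) * \<chi> (snd p))"
  have pa: "purity n \<chi> a = Re (\<Sum>p\<in>D n. X p * cnj (X (sw n a p)))" if "a \<in> Pow {0..<n}" for a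
    using purity_sw[of a n \<chi>] that by (simp add: X_def mult.assoc)
  have "(\<Sum>a\<in>Pow {0..<n}. purity n \<chi> a) = (\<Sum>a\<in>Pow {0..<n}. Re (\<Sum>p\<in>D n. X p * cnj (X (sw n a p))))"
    by (rule sum.cong[OF refl]) (rule pa)
  also have "\<dots> = Re (\<Sum>a\<in>Pow {0..<n}. \<Sum>p\<in>D n. X p * cnj (X (sw n a p)))" by (simp add: Re_sum)
  also have "(\<Sum>a\<in>Pow {0..<n}. \<Sum>p\<in>D n. X p * cnj (X (sw n a p))) = 2^n * ipD n X (Pj n X)"
    unfolding ipD_Pj by simp
  also have "ipD n X (Pj n X) = of_real (nsq n (Pj n X))"
    using K1[of n X X] ipD_self[of n "Pj n X"] by simp
  finally have "(\<Sum>a\<in>Pow {0..<n}. purity n \<chi> a) = 2^n * nsq n (Pj n X)" by simp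
  then show ?thesis unfolding C_ent_def X_def by simp
qed

lemma nsq_prod: "nsq n (\<lambda>p. \<chi> (fst p) * \<chi> (snd p)) = (\<Sum>i<2^n. (cmod (\<chi> i))^2)^2"
proof -
  have "nsq n (\<lambda>p. \<chi> (fst p) * \<chi> (snd p)) = (\<Sum>x<2^n. \<Sum>y<2^n. (cmod (\<chi> x))^2 * (cmod (\<chi> y))^2)"
    unfolding nsq_def D_def by (simp add: sum.cartesian_product case_prod_beta norm_mult power_mult_distrib)
  also have "\<dots> = (\<Sum>i<2^n. (cmod (\<chi> i))^2)^2"
    by (simp add: power2_eq_square[of "sum _ _"] sum_product)
  finally show ?thesis .
qed

lemma ipD_prod: "ipD n (\<lambda>p. \<chi> (fst p) * \<chi> (snd p)) (\<lambda>p. \<omega> (fst p) * \<omega> (snd p)) = (\<Sum>i<2^n. \<chi> i * cnj (\<omega> i))^2"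
proof -
  have "ipD n (\<lambda>p. \<chi> (fst p) * \<chi> (snd p)) (\<lambda>p. \<omega> (fst p) * \<omega> (snd p)) = (\<Sum>x<2^n. \<Sum>y<2^n. (\<chi> x * cnj (\<omega> x)) * (\<chi> y * cnj (\<omega> y)))"
    unfolding ipD_def D_def by (simp add: sum.cartesian_product case_prod_beta algebra_simps)
  also have "\<dots> = (\<Sum>i<2^n. \<chi> i * cnj (\<omega> i))^2"
    by (simp add: power2_eq_square[of "sum _ _"] sum_product)
  finally show ?thesis .
qed


lemma proj_rk: "proj n \<psi> - proj n \<phi> = rk (2^n) \<psi> \<phi> 1 0 0 (-1)"
  by (rule eq_matI) (auto simp: proj_def rk_def)

lemma ctrans_rk: "ctrans (rk N x y 1 0 0 (-1)) = rk N x y 1 0 0 (-1)"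
  by (rule eq_matI) (auto simp: ctrans_def rk_def mult.commute)

lemma ip_swap: "(\<Sum>k<N. x k * cnj (y k)) = cnj (ip N x y)"
  by (simp add: ip_def cnj_sum mult.commute)

lemma ip_self: assumes "pure_state n \<chi>" shows "ip (2^n) \<chi> \<chi> = 1"
proof -
  have "ip (2^n) \<chi> \<chi> = of_real (\<Sum>k<2^n. (cmod (\<chi> k))^2)"
    unfolding ip_def of_real_sum by (rule sum.cong[OF refl]) (metis complex_norm_square mult.commute)
  then show ?thesis using assms unfolding pure_state_def by (metis of_real_1)
qed

lemma trace_part: assumes p1: "pure_state n \<psi>" and p2: "pure_state n \<phi>"
  shows "cmod (ip (2^n) \<psi> \<phi>) \<le> 1" "trace_dist (proj n \<psi>) (proj n \<phi>) = sqrt (1 - (cmod (ip (2^n) \<psi> \<phi>))^2)"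
proof -
  define N where "N = (2::nat)^n"
  define c where "c = ip N \<psi> \<phi>"
  have i1: "ip N \<psi> \<psi> = 1" "ip N \<phi> \<phi> = 1" using ip_self[OF p1] ip_self[OF p2] by (simp_all add: N_def)
  have i2: "ip N \<phi> \<psi> = cnj c" unfolding c_def ip_def by (simp add: cnj_sum mult.commute)
  have "cmod c = cmod (\<Sum>k<N. \<phi> k * cnj (\<psi> k))" unfolding c_def ip_def by (simp add: mult.commute)
  also have "\<dots> \<le> sqrt (\<Sum>k<N. (cmod (\<phi> k))^2) * sqrt (\<Sum>k<N. (cmod (\<psi> k))^2)" by (rule cs_gen) simp
  also have "\<dots> = 1" using p1 p2 by (simp add: pure_state_def N_def)
  finally have c1: "cmod c \<le> 1" .
  then show "cmod (ip (2^n) \<psi> \<phi>) \<le> 1" by (simp add: c_def N_def)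
  define t where "t = 1 - (cmod c)^2"
  have t0: "t \<ge> 0" unfolding t_def using c1 by (simp add: power_le_one)
  have st: "complex_of_real t = 1 - c * cnj c" unfolding t_def of_real_diff of_real_1 complex_norm_square ..
  define A where "A = rk N \<psi> \<phi> 1 0 0 (-1)"
  define B where "B = rk N \<psi> \<phi> 1 (-c) (-cnj c) 1"
  have AA: "ctrans A * A = B" unfolding A_def B_def ctrans_rk
    by (simp add: rk_mult[OF refl refl refl refl] i1 i2 c_def[symmetric])
  have "B * B = rk N \<psi> \<phi> (1 - c*cnj c) (-(1 - c*cnj c)*c) (-(1 - c*cnj c)*cnj c) (1 - c*cnj c)"
    unfolding B_def by (simp add: rk_mult[OF refl refl refl refl] i1 i2 c_def[symmetric] algebra_simps)
  also have "\<dots> = complex_of_real t \<cdot>\<^sub>m B"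
    unfolding st B_def by (rule eq_matI) (auto simp: rk_def algebra_simps)
  finally have BB: "B * B = complex_of_real t \<cdot>\<^sub>m B" .
  have "tr B = (\<Sum>i<N. \<psi> i * cnj (\<psi> i)) - c * (\<Sum>i<N. \<psi> i * cnj (\<phi> i)) - cnj c * (\<Sum>i<N. \<phi> i * cnj (\<psi> i)) + (\<Sum>i<N. \<phi> i * cnj (\<phi> i))"
    unfolding tr_def B_def rk_def by (simp add: sum.distrib sum_subtractf sum_distrib_left algebra_simps)
  also have "\<dots> = 2 * complex_of_real t"
    unfolding ip_swap i1 i2 st c_def[symmetric] by simp
  finally have trB: "tr B = 2 * complex_of_real t" .
  have Bc: "B \<in> carrier_mat N N" by (simp add: B_def)
  have "trace_norm (proj n \<psi> - proj n \<phi>) = 2 * sqrt t"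
    unfolding trace_norm_def proj_rk N_def[symmetric] A_def[symmetric] AA by (rule tn_lemma[OF Bc BB trB t0])
  then show "trace_dist (proj n \<psi>) (proj n \<phi>) = sqrt (1 - (cmod (ip (2^n) \<psi> \<phi>))^2)"
    by (simp add: trace_dist_def t_def c_def N_def)
qed

theorem mainTheorem14:
  fixes n :: nat and \<psi> \<phi> :: "nat \<Rightarrow> complex"
  assumes "pure_state n \<psi>" and "pure_state n \<phi>"
  shows "\<bar>C_ent n \<psi> - C_ent n \<phi>\<bar> \<le> sqrt 2 * trace_dist (proj n \<psi>) (proj n \<phi>)"
proof -
  define c where "c = ip (2^n) \<psi> \<phi>"
  note tp = trace_part[OF assms, folded c_def]
  define X where "X = (\<lambda>p. \<psi> (fst p) * \<psi> (snd p))"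
  define Y where "Y = (\<lambda>p. \<phi> (fst p) * \<phi> (snd p))"
  define u1 where "u1 = Pj n X"
  define u2 where "u2 = Pj n Y"
  define w1 where "w1 = (\<lambda>p. X p - Pj n X p)"
  define w2 where "w2 = (\<lambda>p. Y p - Pj n Y p)"
  have nn: "nsq n f \<ge> 0" for f unfolding nsq_def by (rule sum_nonneg) simp
  have nX: "nsq n X = 1" using assms(1) unfolding X_def nsq_prod by (simp add: pure_state_def)
  have nY: "nsq n Y = 1" using assms(2) unfolding Y_def nsq_prod by (simp add: pure_state_def)
  have "complex_of_real (nsq n X) = of_real (nsq n u1) + of_real (nsq n w1)"
    using decomp[of n X X] unfolding ipD_self u1_def w1_def .
  then have s1: "nsq n u1 + nsq n w1 = 1" using nX by (metis of_real_add of_real_eq_iff)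
  have "complex_of_real (nsq n Y) = of_real (nsq n u2) + of_real (nsq n w2)"
    using decomp[of n Y Y] unfolding ipD_self u2_def w2_def .
  then have s2: "nsq n u2 + nsq n w2 = 1" using nY by (metis of_real_add of_real_eq_iff)
  have "(cmod c)^2 = cmod (ipD n X Y)"
    unfolding X_def Y_def ipD_prod ip_swap c_def by (simp add: norm_power)
  also have "ipD n X Y = ipD n u1 u2 + ipD n w1 w2" using decomp[of n X Y] unfolding u1_def u2_def w1_def w2_def .
  also have "cmod \<dots> \<le> cmod (ipD n u1 u2) + cmod (ipD n w1 w2)" by (rule norm_triangle_ineq)
  also have "\<dots> \<le> sqrt (nsq n u1) * sqrt (nsq n u2) + sqrt (nsq n w1) * sqrt (nsq n w2)"
    by (intro add_mono cs_D)
  finally have bnd: "(cmod c)^2 \<le> sqrt (nsq n u1) * sqrt (nsq n u2) + sqrt (nsq n w1) * sqrt (nsq n w2)" .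
  have sq: "(sqrt (nsq n f))^2 = nsq n f" for f using nn by simp
  have "\<bar>(sqrt (nsq n u1))^2 - (sqrt (nsq n u2))^2\<bar> \<le> sqrt 2 * sqrt (1 - (cmod c)^2)"
    by (rule real_ineq) (use s1 s2 bnd in \<open>simp_all add: sq nn\<close>)
  moreover have "C_ent n \<psi> = 1 - nsq n u1" unfolding u1_def X_def by (rule C_nsq)
  moreover have "C_ent n \<phi> = 1 - nsq n u2" unfolding u2_def Y_def by (rule C_nsq)
  ultimately show ?thesis using tp(2) unfolding sq by (simp add: abs_minus_commute)
qed


end
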